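(* Let $C$ be the Cantor set, $\psi_{\mathcal{H}}$ an increasing submodular setfunction on the clopen subsets of $C$ with $\psi_{\mathcal{H}}(\emptyset)=0$, let $\psi_{\mathcal{K}}(K)=\inf\{\psi_{\mathcal{H}}(H)\colon H \text{ clopen},\ K\subseteq H\}$ for compact $K\subseteq C$, and let $\psi_{\mathcal{B}}(B)=\sup\{\psi_{\mathcal{K}}(K)\colon K\subseteq B \text{ compact}\}$ for Borel $B\subseteq C$. Let $q\in\mathbb{N}$ and let $F\colon C\to[q]$ be Borel measurable. Then for every $\varepsilon>0$ there exists a continuous map $G\colon C\to[q]$ such that $d(\psi_{\mathcal{B}}\circ F^{-1},\psi_{\mathcal{B}}\circ G^{-1})<\varepsilon$.
   Context: A setfunction is increasing if $X\subseteq Y$ implies $\varphi(X)\le\varphi(Y)$ and submodular if $\varphi(X)+\varphi(Y)\ge\varphi(X\cap Y)+\varphi(X\cup Y)$. For a setfunction $\varphi$ on a set-algebra $(J,\mathcal{B})$ and a map $F\colon J\to[k]$ with $F^{-1}(i)\in\mathcal{B}$, $\varphi\circ F^{-1}$ is the setfunction $A\mapsto\varphi(F^{-1}(A))$ on $2^{[k]}$ (a quotient of $\varphi$); $Q_k(\varphi)\subseteq\mathbb{R}^{2^k}$ is the set of all quotients of $\varphi$ on $[k]$. The pseudometric $d$ between setfunctions is $d(\varphi_1,\varphi_2)=\sum_{k=1}^\infty 2^{-k}d_H^{(k)}(Q_k(\varphi_1),Q_k(\varphi_2))$, where $d_H^{(k)}$ is the Hausdorff distance in Euclidean $\mathbb{R}^{2^k}$.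 ($[q]$ carries the discrete topology.) *)

theory Defs
  imports "HOL-Analysis.Analysis" "HOL-Probability.Probability"
begin

fun cantor_approx :: "nat \<Rightarrow> real set" where
  "cantor_approx 0 = {0..1}"
| "cantor_approx (Suc n) =
     (\<lambda>x. x / 3) ` cantor_approx n \<union> (\<lambda>x. x / 3 + 2 / 3) ` cantor_approx n"

definition cantor_set :: "real set" where
  "cantor_set = (\<Inter>n. cantor_approx n)"

definition clopen_in_C :: "real set \<Rightarrow> bool" where
  "clopen_in_C H \<longleftrightarrow> openin (top_of_set cantor_set) H \<and> closedin (top_of_set cantor_set) H"

definition increasing_on :: "'a set set \<Rightarrow> ('a set \<Rightarrow> real) \<Rightarrow> bool" where
  "increasing_on \<B> \<phi> \<longleftrightarrow> (\<forall>X\<in>\<B>. \<forall>Y\<in>\<B>. X \<subseteq> Y \<longrightarrow> \<phi> X \<le> \<phi> Y)"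

definition submodular_on :: "'a set set \<Rightarrow> ('a set \<Rightarrow> real) \<Rightarrow> bool" where
  "submodular_on \<B> \<phi> \<longleftrightarrow>
     (\<forall>X\<in>\<B>. \<forall>Y\<in>\<B>. \<phi> X + \<phi> Y \<ge> \<phi> (X \<inter> Y) + \<phi> (X \<union> Y))"

definition psiK :: "(real set \<Rightarrow> real) \<Rightarrow> real set \<Rightarrow> real" where
  "psiK \<psi>H K = Inf {\<psi>H H | H. clopen_in_C H \<and> K \<subseteq> H}"

definition psiB :: "(real set \<Rightarrow> real) \<Rightarrow> real set \<Rightarrow> real" where
  "psiB \<psi>H B = Sup {psiK \<psi>H K | K. compact K \<and> K \<subseteq> B}"

text \<open>[k] = {1..k}. A setfunction on 2^[k] is represented as a function
  nat set => real; only its values on subsets of [k] matter (we normalise to 0 elsewhere).\<close>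

definition quotients :: "nat \<Rightarrow> (nat set \<Rightarrow> real) \<Rightarrow> nat \<Rightarrow> (nat set \<Rightarrow> real) set" where
  "quotients q \<phi> k =
     {(\<lambda>A. if A \<subseteq> {1..k} then \<phi> {i \<in> {1..q}. g i \<in> A} else 0) | g.
        g ` {1..q} \<subseteq> {1..k}}"

definition edist :: "nat \<Rightarrow> (nat set \<Rightarrow> real) \<Rightarrow> (nat set \<Rightarrow> real) \<Rightarrow> real" where
  "edist k u v = sqrt (\<Sum>A\<in>Pow {1..k}. (u A - v A)\<^sup>2)"

text \<open>Hausdorff distance (used here only for nonempty finite sets).\<close>
definition hausd :: "nat \<Rightarrow> (nat set \<Rightarrow> real) set \<Rightarrow> (nat set \<Rightarrow> real) set \<Rightarrow> real" where
  "hausd k S T = max (SUP x\<in>S. INF y\<in>T. edist k x y) (SUP y\<in>T. INF x\<in>S. edist k x y)"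

definition setfun_dist :: "nat \<Rightarrow> (nat set \<Rightarrow> real) \<Rightarrow> (nat set \<Rightarrow> real) \<Rightarrow> real" where
  "setfun_dist q \<phi>1 \<phi>2 =
     (\<Sum>k. (1/2) ^ (Suc k) * hausd (Suc k) (quotients q \<phi>1 (Suc k)) (quotients q \<phi>2 (Suc k)))"

end

theory Submission
  imports Defs
begin


lemma cantor_approx_sub: "cantor_approx n \<subseteq> {0..1}"
  by (induction n) auto

lemma cantor_approx_compact: "compact (cantor_approx n)"
proof (induction n)
  case 0 then show ?case by simp
next
  case (Suc n)
  have "compact ((\<lambda>x. x / 3) ` cantor_approx n)"
    by (rule compact_continuous_image[OF _ Suc]) (auto intro!: continuous_intros)
  moreover have "compact ((\<lambda>x. x / 3 + 2/3) ` cantor_approx n)"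
    by (rule compact_continuous_image[OF _ Suc]) (auto intro!: continuous_intros)
  ultimately show ?case by (simp add: compact_Un)
qed

lemma cantor_compact: "compact cantor_set"
proof -
  have cl: "closed (cantor_approx n)" for n using compact_imp_closed[OF cantor_approx_compact] .
  have "closed cantor_set" unfolding cantor_set_def
    by (intro closed_INT ballI cl)
  moreover have "cantor_set \<subseteq> {0..1}"
    using cantor_approx_sub[of 0] unfolding cantor_set_def by blast
  then have "bounded cantor_set"
    by (rule bounded_subset[OF bounded_closed_interval])
  ultimately show ?thesis using compact_eq_bounded_closed by blast
qed

lemma zero_in_cantor: "(0::real) \<in> cantor_set"
proof -
  have "0 \<in> cantor_approx n" for n
  proof (induction n)
    case (Suc n) then show ?case by (auto intro: image_eqI[of 0 _ 0])
  qed simp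
  then show ?thesis unfolding cantor_set_def by auto
qed

lemma cantor_interval_len:
  "a \<le> b \<Longrightarrow> {a..b} \<subseteq> cantor_approx n \<Longrightarrow> b - a \<le> (1/3)^n"
proof (induction n arbitrary: a b)
  case 0
  then show ?case by auto
next
  case (Suc n)
  let ?A = "cantor_approx n"
  have A01: "?A \<subseteq> {0..1}" by (rule cantor_approx_sub)
  have sub: "{a..b} \<subseteq> (\<lambda>x. x / 3) ` ?A \<union> (\<lambda>x. x / 3 + 2 / 3) ` ?A"
    using Suc.prems by simp
  have f1: "(\<lambda>x. x / 3) ` ?A \<subseteq> {0..1/3}" using A01 by auto
  have f2: "(\<lambda>x. x / 3 + 2/3) ` ?A \<subseteq> {2/3..1}" using A01 by auto
  consider "b < 2/3" | "a > 1/3" | "a \<le> 1/3 \<and> b \<ge> 2/3" by linarith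
  then show ?case
  proof cases
    case 1
    have "{3*a..3*b} \<subseteq> ?A"
    proof
      fix z assume z: "z \<in> {3*a..3*b}"
      then have zab: "z/3 \<in> {a..b}" by auto
      have "z/3 \<notin> (\<lambda>x. x / 3 + 2/3) ` ?A"
      proof
        assume "z/3 \<in> (\<lambda>x. x / 3 + 2/3) ` ?A"
        then have "z/3 \<in> {2/3..1}" using f2 by blast
        then show False using zab 1 by auto
      qed
      then have "z/3 \<in> (\<lambda>x. x / 3) ` ?A" using sub zab by blast
      then obtain w where "w \<in> ?A" "z/3 = w/3" by blast
      then show "z \<in> ?A" by simp
    qed
    from Suc.IH[OF _ this] Suc.prems show ?thesis by simp
  next
    case 2
    have "{3*a-2..3*b-2} \<subseteq> ?A"
    proof
      fix z assume z: "z \<in> {3*a-2..3*b-2}"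
      then have zab: "z/3 + 2/3 \<in> {a..b}" by auto
      have "z/3 + 2/3 \<notin> (\<lambda>x. x / 3) ` ?A"
      proof
        assume "z/3 + 2/3 \<in> (\<lambda>x. x / 3) ` ?A"
        then have "z/3 + 2/3 \<in> {0..1/3}" using f1 by blast
        then show False using zab 2 by auto
      qed
      then have "z/3 + 2/3 \<in> (\<lambda>x. x / 3 + 2/3) ` ?A" using sub zab by blast
      then obtain w where "w \<in> ?A" "z/3 + 2/3 = w/3 + 2/3" by blast
      then show "z \<in> ?A" by simp
    qed
    from Suc.IH[OF _ this] Suc.prems show ?thesis by simp
  next
    case 3
    then have h: "1/2 \<in> {a..b}" by auto
    have "1/2 \<notin> (\<lambda>x. x / 3) ` ?A" using f1 by auto
    moreover have "1/2 \<notin> (\<lambda>x. x / 3 + 2/3) ` ?A" using f2 by auto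
    ultimately have False using sub h by blast
    then show ?thesis ..
  qed
qed

lemma not_cantor_between:
  assumes "(u::real) < v" shows "\<exists>z. u < z \<and> z < v \<and> z \<notin> cantor_set"
proof (rule ccontr)
  assume "\<not> ?thesis"
  then have sub: "{u<..<v} \<subseteq> cantor_set" by auto
  define c1 where "c1 = (2*u+v)/3"
  define c2 where "c2 = (u + v * 2) / 3"
  have ab: "c1 < c2" "{c1..c2} \<subseteq> {u<..<v}" using assms by (auto simp: c1_def c2_def)
  obtain n where n: "(1/3::real)^n < c2 - c1"
    using real_arch_pow_inv[of "c2-c1" "1/3"] ab by auto
  have "{c1..c2} \<subseteq> cantor_approx n" using ab sub unfolding cantor_set_def by blast
  from cantor_interval_len[OF _ this] ab n show False by simp
qed

lemma cantor_clopen_basic: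
  assumes "a \<notin> cantor_set" "b \<notin> cantor_set"
  shows "clopen_in_C (cantor_set \<inter> {a<..<b})"
proof -
  have "cantor_set \<inter> {a<..<b} = cantor_set \<inter> {a..b}" using assms by (auto simp: less_le)
  then show ?thesis unfolding clopen_in_C_def
    by (metis closed_atLeastAtMost closedin_closed_Int open_greaterThanLessThan openin_open_Int)
qed



abbreviation "CC \<equiv> cantor_set"

lemma clopen_sub: "clopen_in_C H \<Longrightarrow> H \<subseteq> CC"
  unfolding clopen_in_C_def by (meson openin_imp_subset)

lemma clopen_compact: "clopen_in_C H \<Longrightarrow> compact H"
  unfolding clopen_in_C_def
  by (meson closedin_compact cantor_compact)

lemma clopen_open: "clopen_in_C H \<Longrightarrow> \<exists>U. open U \<and> H = CC \<inter> U"
  unfolding clopen_in_C_def by (meson openin_open)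

lemma clopen_empty: "clopen_in_C {}" unfolding clopen_in_C_def by auto
lemma clopen_C: "clopen_in_C CC" unfolding clopen_in_C_def by auto
lemma clopen_Un: "clopen_in_C A \<Longrightarrow> clopen_in_C B \<Longrightarrow> clopen_in_C (A \<union> B)"
  unfolding clopen_in_C_def by auto
lemma clopen_Int: "clopen_in_C A \<Longrightarrow> clopen_in_C B \<Longrightarrow> clopen_in_C (A \<inter> B)"
  unfolding clopen_in_C_def by auto
lemma clopen_Diff: "clopen_in_C A \<Longrightarrow> clopen_in_C B \<Longrightarrow> clopen_in_C (A - B)"
  unfolding clopen_in_C_def by auto

lemma clopen_finite_UN: "finite T \<Longrightarrow> (\<And>x. x \<in> T \<Longrightarrow> clopen_in_C (f x)) \<Longrightarrow> clopen_in_C (\<Union>x\<in>T. f x)"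
  by (induction T rule: finite_induct) (auto intro: clopen_Un clopen_empty)

lemma zero_dim:
  assumes K: "compact K" "K \<subseteq> CC" and U: "open U" "K \<subseteq> U"
  shows "\<exists>W. clopen_in_C W \<and> K \<subseteq> W \<and> W \<subseteq> U"
proof -
  have "\<forall>x\<in>K. \<exists>p. fst p \<notin> CC \<and> snd p \<notin> CC \<and> x \<in> {fst p<..<snd p} \<and> {fst p<..<snd p} \<subseteq> U"
  proof
    fix x assume "x \<in> K"
    with U obtain r where r: "r > 0" "ball x r \<subseteq> U" by (meson open_contains_ball subsetD)
    obtain a where a: "x - r < a" "a < x" "a \<notin> CC" using not_cantor_between[of "x-r" x] r by auto
    obtain b where b: "x < b" "b < x + r" "b \<notin> CC" using not_cantor_between[of x "x+r"] r by auto
    have "{a<..<b} \<subseteq> ball x r" using a b by (auto simp: dist_real_def)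
    then show "\<exists>p. fst p \<notin> CC \<and> snd p \<notin> CC \<and> x \<in> {fst p<..<snd p} \<and> {fst p<..<snd p} \<subseteq> U"
      using a b r by (intro exI[of _ "(a,b)"]) auto
  qed
  then obtain p where p: "\<And>x. x \<in> K \<Longrightarrow> fst (p x) \<notin> CC \<and> snd (p x) \<notin> CC \<and> x \<in> {fst (p x)<..<snd (p x)} \<and> {fst (p x)<..<snd (p x)} \<subseteq> U"
    by metis
  have "K \<subseteq> (\<Union>x\<in>K. {fst (p x)<..<snd (p x)})" using p by blast
  then obtain T where T: "T \<subseteq> K" "finite T" "K \<subseteq> (\<Union>x\<in>T. {fst (p x)<..<snd (p x)})"
    using compactE_image[OF K(1), of K "\<lambda>x. {fst (p x)<..<snd (p x)}"] by auto
  let ?W = "\<Union>x\<in>T. CC \<inter> {fst (p x)<..<snd (p x)}"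
  have "clopen_in_C ?W"
  proof (rule clopen_finite_UN[OF T(2)])
    fix x assume "x \<in> T"
    then have "x \<in> K" using T(1) by blast
    then show "clopen_in_C (CC \<inter> {fst (p x)<..<snd (p x)})"
      using p[of x] by (intro cantor_clopen_basic) auto
  qed
  moreover have "K \<subseteq> ?W"
  proof
    fix x assume x: "x \<in> K"
    then obtain y where "y \<in> T" "x \<in> {fst (p y)<..<snd (p y)}" using T(3) by blast
    moreover have "x \<in> CC" using x K(2) by blast
    ultimately show "x \<in> ?W" by blast
  qed
  moreover have "?W \<subseteq> U"
  proof
    fix x assume "x \<in> ?W"
    then obtain y where y: "y \<in> T" "x \<in> {fst (p y)<..<snd (p y)}" by blast
    then have "y \<in> K" using T(1) by blast
    then show "x \<in> U" using p[of y] y(2) by blast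
  qed
  ultimately show ?thesis by (intro exI[of _ ?W] conjI) assumption+
qed



locale capa =
  fixes P :: "real set \<Rightarrow> real"
  assumes incr: "increasing_on {H. clopen_in_C H} P"
    and submod: "submodular_on {H. clopen_in_C H} P"
    and empty: "P {} = 0"
begin

definition co :: "real set \<Rightarrow> real" where
  "co U = Sup {P H | H. clopen_in_C H \<and> H \<subseteq> U}"

definition cs :: "real set \<Rightarrow> real" where
  "cs A = Inf {co U | U. open U \<and> A \<subseteq> U}"

lemma P_mono: "clopen_in_C A \<Longrightarrow> clopen_in_C B \<Longrightarrow> A \<subseteq> B \<Longrightarrow> P A \<le> P B"
  using incr unfolding increasing_on_def by auto

lemma P_nonneg: "clopen_in_C H \<Longrightarrow> 0 \<le> P H"
  using P_mono[of "{}" H] empty clopen_empty by auto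

lemma P_le_M: "clopen_in_C H \<Longrightarrow> P H \<le> P CC"
  using P_mono[of H CC] clopen_C clopen_sub by auto

lemma P_submod: "clopen_in_C A \<Longrightarrow> clopen_in_C B \<Longrightarrow> P (A \<union> B) + P (A \<inter> B) \<le> P A + P B"
proof -
  assume "clopen_in_C A" "clopen_in_C B"
  then have "P (A \<inter> B) + P (A \<union> B) \<le> P A + P B" using submod unfolding submodular_on_def by auto
  then show ?thesis by linarith
qed

lemma co_set_ne: "{P H | H. clopen_in_C H \<and> H \<subseteq> U} \<noteq> {}"
  using clopen_empty by blast

lemma co_set_bdd: "bdd_above {P H | H. clopen_in_C H \<and> H \<subseteq> U}"
  using P_le_M by (auto intro!: bdd_aboveI[of _ "P CC"])

lemma co_ge: "clopen_in_C H \<Longrightarrow> H \<subseteq> U \<Longrightarrow> P H \<le> co U"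
  unfolding co_def by (rule cSup_upper[OF _ co_set_bdd]) auto

lemma co_le: "(\<And>H. clopen_in_C H \<Longrightarrow> H \<subseteq> U \<Longrightarrow> P H \<le> t) \<Longrightarrow> co U \<le> t"
  unfolding co_def by (rule cSup_least[OF co_set_ne]) auto

lemma co_nonneg: "0 \<le> co U"
  using co_ge[of "{}" U] clopen_empty empty by auto

lemma co_le_M: "co U \<le> P CC"
  using P_le_M by (intro co_le) auto

lemma co_mono: "U \<subseteq> V \<Longrightarrow> co U \<le> co V"
  by (intro co_le co_ge) auto

lemma cs_set_ne: "{co U | U. open U \<and> A \<subseteq> U} \<noteq> {}"
  by (rule ccontr) (use open_UNIV in blast)

lemma cs_set_bdd: "bdd_below {co U | U. open U \<and> A \<subseteq> U}"
  using co_nonneg by (auto intro!: bdd_belowI[of _ 0])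

lemma cs_le: "open U \<Longrightarrow> A \<subseteq> U \<Longrightarrow> cs A \<le> co U"
  unfolding cs_def by (rule cInf_lower[OF _ cs_set_bdd]) auto

lemma cs_ge: "(\<And>U. open U \<Longrightarrow> A \<subseteq> U \<Longrightarrow> t \<le> co U) \<Longrightarrow> t \<le> cs A"
  unfolding cs_def by (rule cInf_greatest[OF cs_set_ne]) auto

lemma cs_nonneg: "0 \<le> cs A"
  using co_nonneg by (intro cs_ge) auto

lemma cs_le_M: "cs A \<le> P CC"
  using cs_le[of UNIV A] co_le_M[of UNIV] by auto

lemma cs_mono: "A \<subseteq> B \<Longrightarrow> cs A \<le> cs B"
  by (intro cs_ge) (auto intro: cs_le)

lemma cs_approx:
  assumes "e > 0" shows "\<exists>U. open U \<and> A \<subseteq> U \<and> co U < cs A + e"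
proof -
  have "cs A < cs A + e" using assms by simp
  then obtain y where "y \<in> {co U | U. open U \<and> A \<subseteq> U}" "y < cs A + e"
    unfolding cs_def[of A] using cInf_lessD[OF cs_set_ne] by blast
  then show ?thesis by blast
qed

lemma co_clopen: "clopen_in_C H \<Longrightarrow> H = CC \<inter> U \<Longrightarrow> co U = P H"
  by (intro antisym co_le co_ge P_mono) (auto dest: clopen_sub)

lemma cs_clopen: "clopen_in_C H \<Longrightarrow> cs H = P H"
proof -
  assume H: "clopen_in_C H"
  then obtain U where U: "open U" "H = CC \<inter> U" using clopen_open by blast
  have "cs H \<le> P H" using cs_le[of U H] co_clopen[OF H U(2)] U by auto
  moreover have "P H \<le> cs H" using H by (intro cs_ge co_ge) auto
  ultimately show ?thesis by simp
qed

lemma psiK_set_ne: "K \<subseteq> CC \<Longrightarrow> {P H | H. clopen_in_C H \<and> K \<subseteq> H} \<noteq> {}"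
  using clopen_C by blast

lemma psiK_set_bdd: "bdd_below {P H | H. clopen_in_C H \<and> K \<subseteq> H}"
  using P_nonneg by (auto intro!: bdd_belowI[of _ 0])

lemma cs_compact:
  assumes K: "compact K" "K \<subseteq> CC" shows "cs K = psiK P K"
proof (rule antisym)
  show "cs K \<le> psiK P K"
    unfolding psiK_def
  proof (rule cInf_greatest[OF psiK_set_ne[OF K(2)]])
    fix x assume "x \<in> {P H | H. clopen_in_C H \<and> K \<subseteq> H}"
    then obtain H where H: "x = P H" "clopen_in_C H" "K \<subseteq> H" by blast
    then obtain U where U: "open U" "H = CC \<inter> U" using clopen_open by blast
    show "cs K \<le> x" using cs_le[of U K] co_clopen[OF H(2) U(2)] U H by auto
  qed
  show "psiK P K \<le> cs K"
  proof (rule cs_ge)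
    fix U assume U: "open U" "K \<subseteq> U"
    obtain W where W: "clopen_in_C W" "K \<subseteq> W" "W \<subseteq> U" using zero_dim[OF K U] by blast
    have "psiK P K \<le> P W" unfolding psiK_def
      by (rule cInf_lower[OF _ psiK_set_bdd]) (use W in blast)
    also have "\<dots> \<le> co U" using W by (intro co_ge) auto
    finally show "psiK P K \<le> co U" .
  qed
qed

lemma clopen_split:
  assumes H: "clopen_in_C H" "H \<subseteq> U \<union> V" and UV: "open U" "open V"
  shows "\<exists>H1 H2. clopen_in_C H1 \<and> clopen_in_C H2 \<and> H1 \<subseteq> U \<and> H2 \<subseteq> V \<and> H1 \<union> H2 = H \<and> H1 \<inter> H2 = {}"
proof -
  have "compact (H - V)" using clopen_compact[OF H(1)] UV(2) by (simp add: compact_diff)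
  moreover have "H - V \<subseteq> CC" using clopen_sub[OF H(1)] by auto
  moreover have "H - V \<subseteq> U" using H by auto
  ultimately obtain W where W: "clopen_in_C W" "H - V \<subseteq> W" "W \<subseteq> U"
    using zero_dim UV by metis
  show ?thesis
    by (rule exI[of _ "H \<inter> W"], rule exI[of _ "H - W"]) (use W H in \<open>auto intro: clopen_Int clopen_Diff\<close>)
qed

lemma co_ssa:
  assumes UV: "open U" "open V"
  shows "co (U \<union> V) + co (U \<inter> V) \<le> co U + co V"
proof -
  have key: "P H + P H' \<le> co U + co V"
    if H: "clopen_in_C H" "H \<subseteq> U \<union> V" and H': "clopen_in_C H'" "H' \<subseteq> U \<inter> V" for H H'
  proof -
    obtain H1 H2 where S: "clopen_in_C H1" "clopen_in_C H2" "H1 \<subseteq> U" "H2 \<subseteq> V" "H1 \<union> H2 = H" "H1 \<inter> H2 = {}"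
      using clopen_split[OF H UV] by blast
    let ?X = "H1 \<union> H'" and ?Y = "H2 \<union> H'"
    have cX: "clopen_in_C ?X" "clopen_in_C ?Y" using S H' by (auto intro: clopen_Un)
    have "P H + P H' \<le> P (?X \<union> ?Y) + P (?X \<inter> ?Y)"
    proof -
      have "P H \<le> P (?X \<union> ?Y)" using S cX by (intro P_mono) (auto intro: clopen_Un)
      moreover have "?X \<inter> ?Y = H'" using S by auto
      ultimately show ?thesis by simp
    qed
    also have "\<dots> \<le> P ?X + P ?Y" by (rule P_submod[OF cX])
    also have "\<dots> \<le> co U + co V" using S H' cX by (intro add_mono co_ge) auto
    finally show ?thesis .
  qed
  have "co (U \<union> V) \<le> co U + co V - co (U \<inter> V)"
  proof (rule co_le)
    fix H assume H: "clopen_in_C H" "H \<subseteq> U \<union> V"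
    have "co (U \<inter> V) \<le> co U + co V - P H"
    proof (rule co_le)
      fix H' assume H': "clopen_in_C H'" "H' \<subseteq> U \<inter> V"
      from key[OF H H'] show "P H' \<le> co U + co V - P H" by linarith
    qed
    then show "P H \<le> co U + co V - co (U \<inter> V)" by linarith
  qed
  then show ?thesis by linarith
qed

lemma cs_ssa: "cs (A \<union> B) + cs (A \<inter> B) \<le> cs A + cs B"
proof -
  have "cs (A \<union> B) + cs (A \<inter> B) - cs B \<le> cs A"
  proof (rule cs_ge)
    fix U assume U: "open U" "A \<subseteq> U"
    have "cs (A \<union> B) + cs (A \<inter> B) - co U \<le> cs B"
    proof (rule cs_ge)
      fix V assume V: "open V" "B \<subseteq> V"
      have "cs (A \<union> B) \<le> co (U \<union> V)" using U V by (intro cs_le) auto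
      moreover have "cs (A \<inter> B) \<le> co (U \<inter> V)" using U V by (intro cs_le) auto
      ultimately show "cs (A \<union> B) + cs (A \<inter> B) - co U \<le> co V"
        using co_ssa[OF U(1) V(1)] by linarith
    qed
    then show "cs (A \<union> B) + cs (A \<inter> B) - cs B \<le> co U" by linarith
  qed
  then show ?thesis by linarith
qed

end


context capa begin

lemma cs_cont_below:
  assumes A: "\<And>n. A n \<subseteq> A (Suc n)" and t: "\<And>n. cs (A n) \<le> t"
  shows "cs (\<Union>n. A n) \<le> t"
proof (rule field_le_epsilon)
  fix e :: real assume e: "0 < e"
  have "\<forall>n. \<exists>U. open U \<and> A n \<subseteq> U \<and> co U < cs (A n) + e / 2 ^ Suc n"
    using e by (intro allI cs_approx) simp
  then obtain U where U: "\<And>n. open (U n)" "\<And>n. A n \<subseteq> U n" "\<And>n. co (U n) < cs (A n) + e / 2 ^ Suc n"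
    by metis
  define V where "V n = (\<Union>k\<in>{..n}. U k)" for n
  have Vo: "open (V n)" for n unfolding V_def using U(1) by auto
  have AV: "A n \<subseteq> V n" for n unfolding V_def using U(2) by auto
  have Vb: "co (V n) \<le> cs (A n) + e - e / 2 ^ Suc n" for n
  proof (induction n)
    case 0
    then show ?case using U(3)[of 0] by (simp add: V_def)
  next
    case (Suc n)
    have VS: "V (Suc n) = V n \<union> U (Suc n)" unfolding V_def by (auto simp: atMost_Suc)
    have "A n \<subseteq> V n \<inter> U (Suc n)" using AV[of n] A[of n] U(2)[of "Suc n"] by auto
    then have "cs (A n) \<le> co (V n \<inter> U (Suc n))" using Vo U(1) by (intro cs_le) auto
    moreover have "co (V (Suc n)) + co (V n \<inter> U (Suc n)) \<le> co (V n) + co (U (Suc n))"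
      unfolding VS by (rule co_ssa[OF Vo U(1)])
    moreover have "e / 2 ^ Suc (Suc n) = e / 2 ^ Suc n - e / 2 ^ Suc (Suc n)" by simp
    ultimately show ?case using Suc.IH U(3)[of "Suc n"] by linarith
  qed
  have Vt: "co (V n) \<le> t + e" for n
  proof -
    have "e / 2 ^ Suc n \<ge> 0" using e by simp
    then show ?thesis using Vb[of n] t[of n] by linarith
  qed
  have "cs (\<Union>n. A n) \<le> co (\<Union>n. U n)"
    using U by (intro cs_le) auto
  also have "\<dots> \<le> t + e"
  proof (rule co_le)
    fix H assume H: "clopen_in_C H" "H \<subseteq> (\<Union>n. U n)"
    obtain T where T: "finite T" "H \<subseteq> (\<Union>k\<in>T. U k)"
      using compactE_image[OF clopen_compact[OF H(1)], of UNIV U] H U(1) by auto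
    have "H \<subseteq> V (Max T)"
    proof
      fix x assume "x \<in> H"
      then obtain k where "k \<in> T" "x \<in> U k" using T by auto
      then show "x \<in> V (Max T)" unfolding V_def using T(1) by auto
    qed
    then have "P H \<le> co (V (Max T))" using H by (intro co_ge) auto
    then show "P H \<le> t + e" using Vt by (meson order_trans)
  qed
  finally show "cs (\<Union>n. A n) \<le> t + e" .
qed

lemma cs_cont_above:
  assumes K: "\<And>n. compact (K n)" "\<And>n. K (Suc n) \<subseteq> K n" and t: "\<And>n. t \<le> cs (K n)"
  shows "t \<le> cs (\<Inter>n. K n)"
proof (rule cs_ge)
  fix U assume U: "open U" "(\<Inter>n. K n) \<subseteq> U"
  have "K 0 \<subseteq> (\<Union>n. U \<union> - K n)" using U by auto
  moreover have "open (U \<union> - K n)" for n using U(1) compact_imp_closed[OF K(1)[of n]] by (intro open_Un) auto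
  ultimately obtain T where T: "finite T" "K 0 \<subseteq> (\<Union>n\<in>T. U \<union> - K n)"
    using compactE_image[OF K(1)[of 0], of UNIV "\<lambda>n. U \<union> - K n"] by auto
  define N where "N = Max T"
  have dec: "m \<le> n \<Longrightarrow> K n \<subseteq> K m" for m n
    using lift_Suc_antimono_le[of K, OF K(2)] by blast
  have "K N \<subseteq> U"
  proof
    fix x assume x: "x \<in> K N"
    then have "x \<in> K 0" using dec by blast
    then obtain n where n: "n \<in> T" "x \<in> U \<union> - K n" using T(2) by blast
    have "n \<le> N" using n T(1) unfolding N_def by auto
    then have "x \<in> K n" using x dec by blast
    then show "x \<in> U" using n by auto
  qed
  then have "cs (K N) \<le> co U" using U by (intro cs_le) auto
  then show "t \<le> co U" using t[of N] by linarith
qed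

lemma cs_two_diff:
  assumes "X \<subseteq> X'" "Y \<subseteq> Y'"
  shows "cs (X' \<union> Y') - cs (X \<union> Y) \<le> (cs X' - cs X) + (cs Y' - cs Y)"
proof -
  have 1: "cs (X' \<union> (X \<union> Y')) + cs (X' \<inter> (X \<union> Y')) \<le> cs X' + cs (X \<union> Y')" by (rule cs_ssa)
  have 2: "X' \<union> (X \<union> Y') = X' \<union> Y'" using assms by auto
  have 3: "cs X \<le> cs (X' \<inter> (X \<union> Y'))" using assms by (intro cs_mono) auto
  have 4: "cs (Y' \<union> (X \<union> Y)) + cs (Y' \<inter> (X \<union> Y)) \<le> cs Y' + cs (X \<union> Y)" by (rule cs_ssa)
  have 5: "Y' \<union> (X \<union> Y) = X \<union> Y'" using assms by auto
  have 6: "cs Y \<le> cs (Y' \<inter> (X \<union> Y))" using assms by (intro cs_mono) auto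
  from 1 4 have "cs (X' \<union> Y') + cs (X' \<inter> (X \<union> Y')) \<le> cs X' + cs (X \<union> Y')"
    "cs (X \<union> Y') + cs (Y' \<inter> (X \<union> Y)) \<le> cs Y' + cs (X \<union> Y)" unfolding 2 5 by auto
  with 3 6 show ?thesis by linarith
qed

lemma cs_union_diff:
  assumes "finite S" "\<And>i. i \<in> S \<Longrightarrow> A i \<subseteq> A' i"
  shows "cs (\<Union>i\<in>S. A' i) - cs (\<Union>i\<in>S. A i) \<le> (\<Sum>i\<in>S. cs (A' i) - cs (A i))"
  using assms
proof (induction S rule: finite_induct)
  case empty then show ?case by simp
next
  case (insert j S)
  have "cs (A' j \<union> (\<Union>i\<in>S. A' i)) - cs (A j \<union> (\<Union>i\<in>S. A i))
        \<le> (cs (A' j) - cs (A j)) + (cs (\<Union>i\<in>S. A' i) - cs (\<Union>i\<in>S. A i))"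
    using insert.prems by (intro cs_two_diff) auto
  with insert show ?case by simp
qed

end


definition pre :: "(nat \<Rightarrow> nat) \<Rightarrow> nat \<Rightarrow> nat list" where
  "pre x n = map x [0..<n]"

definition souslin :: "real set \<Rightarrow> bool" where
  "souslin A \<longleftrightarrow> (\<exists>F. (\<forall>s. closed (F s)) \<and> A = {y. \<exists>x. \<forall>n. y \<in> F (pre x n)})"

lemma pre_Suc_Cons: "pre x (Suc n) = x 0 # pre (\<lambda>i. x (Suc i)) n"
  unfolding pre_def by (rule map_upt_Suc)

lemma closed_souslin: "closed A \<Longrightarrow> souslin A"
  unfolding souslin_def by (intro exI[of _ "\<lambda>s. A"]) auto

lemma souslin_UN:
  assumes "\<And>k::nat. souslin (A k)" shows "souslin (\<Union>k. A k)"
proof -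
  have "\<forall>k. \<exists>F. (\<forall>s. closed (F s)) \<and> A k = {y. \<exists>x. \<forall>n. y \<in> F (pre x n)}"
    using assms unfolding souslin_def by blast
  then obtain F where F: "\<And>k s. closed (F k s)" "\<And>k. A k = {y. \<exists>x. \<forall>n. y \<in> F k (pre x n)}"
    by metis
  define G where "G s = (case s of [] \<Rightarrow> UNIV | (k::nat) # t \<Rightarrow> F k t)" for s :: "nat list"
  have Gc: "closed (G s)" for s unfolding G_def using F(1) by (cases s) auto
  have "(\<Union>k. A k) = {y. \<exists>x. \<forall>n. y \<in> G (pre x n)}"
  proof (intro equalityI subsetI)
    fix y assume "y \<in> (\<Union>k. A k)"
    then obtain k x' where x': "\<And>n. y \<in> F k (pre x' n)" using F(2) by blast
    define x where "x i = (if i = 0 then k else x' (i - 1))" for i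
    have "y \<in> G (pre x n)" for n
    proof (cases n)
      case 0 then show ?thesis by (simp add: G_def pre_def)
    next
      case (Suc m)
      have "(\<lambda>i. x (Suc i)) = x'" by (auto simp: x_def)
      then show ?thesis using x'[of m] unfolding Suc pre_Suc_Cons by (simp add: G_def x_def)
    qed
    then show "y \<in> {y. \<exists>x. \<forall>n. y \<in> G (pre x n)}" by blast
  next
    fix y assume "y \<in> {y. \<exists>x. \<forall>n. y \<in> G (pre x n)}"
    then obtain x where x: "\<And>n. y \<in> G (pre x n)" by blast
    have "y \<in> F (x 0) (pre (\<lambda>i. x (Suc i)) n)" for n
      using x[of "Suc n"] unfolding pre_Suc_Cons by (simp add: G_def)
    then have "y \<in> A (x 0)" using F(2) by blast
    then show "y \<in> (\<Union>k. A k)" by blast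
  qed
  then show ?thesis unfolding souslin_def using Gc by blast
qed

lemma souslin_INT:
  assumes "\<And>k::nat. souslin (A k)" shows "souslin (\<Inter>k. A k)"
proof -
  have "\<forall>k. \<exists>F. (\<forall>s. closed (F s)) \<and> A k = {y. \<exists>x. \<forall>n. y \<in> F (pre x n)}"
    using assms unfolding souslin_def by blast
  then obtain F where F: "\<And>k s. closed (F k s)" "\<And>k. A k = {y. \<exists>x. \<forall>n. y \<in> F k (pre x n)}"
    by metis
  define G where "G s = \<Inter> {F k (map (\<lambda>j. s ! prod_encode (k,j)) [0..<m]) | k m. \<forall>j<m. prod_encode (k,j) < length s}" for s
  have Gc: "closed (G s)" for s unfolding G_def using F(1) by (intro closed_Inter) auto
  have mapeq: "map (\<lambda>j. pre x n ! prod_encode (k,j)) [0..<m] = pre (\<lambda>j. x (prod_encode (k,j))) m"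
    if "\<forall>j<m. prod_encode (k,j) < n" for x n k m
    using that unfolding pre_def by (auto simp: nth_map)
  have key: "(\<forall>n. y \<in> G (pre x n)) \<longleftrightarrow> (\<forall>k m. y \<in> F k (pre (\<lambda>j. x (prod_encode (k,j))) m))" for x y
  proof
    assume H: "\<forall>n. y \<in> G (pre x n)"
    show "\<forall>k m. y \<in> F k (pre (\<lambda>j. x (prod_encode (k,j))) m)"
    proof (intro allI)
      fix k m
      define n where "n = Suc (\<Sum>j<m. prod_encode (k,j))"
      have lt: "\<forall>j<m. prod_encode (k,j) < n"
      proof (intro allI impI)
        fix j assume "j < m"
        then have "prod_encode (k,j) \<le> (\<Sum>j<m. prod_encode (k,j))"
          by (intro member_le_sum) auto
        then show "prod_encode (k,j) < n" unfolding n_def by simp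
      qed
      have "F k (map (\<lambda>j. pre x n ! prod_encode (k,j)) [0..<m]) \<in>
          {F k (map (\<lambda>j. pre x n ! prod_encode (k,j)) [0..<m]) | k m. \<forall>j<m. prod_encode (k,j) < length (pre x n)}"
        using lt by (auto simp: pre_def)
      then have "y \<in> F k (map (\<lambda>j. pre x n ! prod_encode (k,j)) [0..<m])"
        using H unfolding G_def by blast
      then show "y \<in> F k (pre (\<lambda>j. x (prod_encode (k,j))) m)" using mapeq[OF lt] by simp
    qed
  next
    assume H: "\<forall>k m. y \<in> F k (pre (\<lambda>j. x (prod_encode (k,j))) m)"
    show "\<forall>n. y \<in> G (pre x n)"
    proof
      fix n
      show "y \<in> G (pre x n)" unfolding G_def
      proof (rule InterI)
        fix S assume "S \<in> {F k (map (\<lambda>j. pre x n ! prod_encode (k,j)) [0..<m]) | k m. \<forall>j<m. prod_encode (k,j) < length (pre x n)}"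
        then obtain k m where km: "S = F k (map (\<lambda>j. pre x n ! prod_encode (k,j)) [0..<m])"
          "\<forall>j<m. prod_encode (k,j) < n" by (auto simp: pre_def)
        then show "y \<in> S" using mapeq[OF km(2)] H by simp
      qed
    qed
  qed
  have "(\<Inter>k. A k) = {y. \<exists>x. \<forall>n. y \<in> G (pre x n)}"
  proof (intro equalityI subsetI)
    fix y assume "y \<in> (\<Inter>k. A k)"
    then have "\<forall>k. \<exists>x. \<forall>n. y \<in> F k (pre x n)" using F(2) by blast
    then obtain xs where xs: "\<And>k n. y \<in> F k (pre (xs k) n)" by metis
    define x where "x p = xs (fst (prod_decode p)) (snd (prod_decode p))" for p
    have "(\<lambda>j. x (prod_encode (k,j))) = xs k" for k by (auto simp: x_def)
    then have "\<forall>n. y \<in> G (pre x n)" using key xs by simp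
    then show "y \<in> {y. \<exists>x. \<forall>n. y \<in> G (pre x n)}" by blast
  next
    fix y assume "y \<in> {y. \<exists>x. \<forall>n. y \<in> G (pre x n)}"
    then obtain x where "\<forall>n. y \<in> G (pre x n)" by blast
    then have "\<forall>k m. y \<in> F k (pre (\<lambda>j. x (prod_encode (k,j))) m)" using key by blast
    then show "y \<in> (\<Inter>k. A k)" using F(2) by blast
  qed
  then show ?thesis unfolding souslin_def using Gc by blast
qed

lemma open_souslin:
  assumes "open S" shows "souslin S"
proof (cases "S = UNIV")
  case True then show ?thesis by (simp add: closed_souslin)
next
  case False
  define B where "B k = {x. 1 / real (Suc k) \<le> infdist x (- S)}" for k
  have "closed (B k)" for k unfolding B_def
    by (intro closed_Collect_le continuous_intros)
  then have "souslin (\<Union>k. B k)" by (intro souslin_UN closed_souslin)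
  moreover have "(\<Union>k. B k) = S"
  proof (intro equalityI subsetI)
    fix x assume "x \<in> (\<Union>k. B k)"
    then obtain k where "1 / real (Suc k) \<le> infdist x (- S)" unfolding B_def by blast
    moreover have "0 < 1 / real (Suc k)" by simp
    ultimately show "x \<in> S" by (metis infdist_zero ComplI not_le)
  next
    fix x assume x: "x \<in> S"
    have "0 < infdist x (- S)"
      using False x assms by (intro infdist_pos_not_in_closed) auto
    then obtain k where "1 / real (Suc k) < infdist x (- S)"
      by (meson nat_approx_posE)
    then show "x \<in> (\<Union>k. B k)" unfolding B_def by (auto intro: less_imp_le)
  qed
  ultimately show ?thesis by simp
qed

lemma borel_souslin:
  assumes "A \<in> sets borel" shows "souslin A \<and> souslin (- A)"
proof -
  have "A \<in> sigma_sets UNIV {S. open S}" using assms sets_borel by blast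
  then show ?thesis
  proof (induction rule: sigma_sets.induct)
    case (Basic a)
    then show ?case by (auto intro: open_souslin closed_souslin)
  next
    case Empty
    then show ?case by (auto intro: closed_souslin)
  next
    case (Compl a)
    then show ?case by (simp add: Compl_eq_Diff_UNIV[symmetric])
  next
    case (Union a)
    have "souslin (\<Union>i. a i)" using Union by (intro souslin_UN) auto
    moreover have "souslin (\<Inter>i. - a i)" using Union by (intro souslin_INT) auto
    ultimately show ?case by simp
  qed
qed



primrec bseq :: "((nat \<Rightarrow> nat) \<Rightarrow> nat \<Rightarrow> (nat \<Rightarrow> nat)) \<Rightarrow> nat \<Rightarrow> (nat \<Rightarrow> nat)" where
  "bseq f 0 = (\<lambda>_. 0)"
| "bseq f (Suc m) = f (bseq f m) m"

primrec kpath :: "(nat list \<Rightarrow> nat) \<Rightarrow> nat \<Rightarrow> nat list" where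
  "kpath c 0 = []"
| "kpath c (Suc n) = kpath c n @ [c (kpath c n)]"

lemma length_kpath: "length (kpath c n) = n"
  by (induction n) auto

lemma pre_kpath: "pre (\<lambda>i. kpath c (Suc i) ! i) n = kpath c n"
proof (induction n)
  case 0 then show ?case by (simp add: pre_def)
next
  case (Suc n)
  have "pre (\<lambda>i. kpath c (Suc i) ! i) (Suc n) = pre (\<lambda>i. kpath c (Suc i) ! i) n @ [kpath c (Suc n) ! n]"
    by (simp add: pre_def)
  also have "\<dots> = kpath c (Suc n)" using Suc length_kpath[of c n] by (simp add: nth_append)
  finally show ?case .
qed

lemma take_pre: "j \<le> n \<Longrightarrow> take j (pre x n) = pre x j"
  unfolding pre_def by (simp add: take_map)

lemma length_pre[simp]: "length (pre x n) = n"
  by (simp add: pre_def)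

lemma koenig:
  fixes F' :: "nat list \<Rightarrow> real set" and b :: "nat \<Rightarrow> nat"
  assumes mono: "\<And>s j. j \<le> length s \<Longrightarrow> F' s \<subseteq> F' (take j s)"
    and lev: "\<And>m. \<exists>s. length s = m \<and> (\<forall>i<m. s ! i \<le> b i) \<and> y \<in> F' s"
  shows "\<exists>x. \<forall>n. y \<in> F' (pre x n)"
proof -
  define good where "good s \<longleftrightarrow> (\<forall>m\<ge>length s. \<exists>s'. length s' = m \<and> (\<forall>i<m. s' ! i \<le> b i) \<and> take (length s) s' = s \<and> y \<in> F' s')" for s
  have g0: "good []" unfolding good_def using lev by auto
  have gstep: "\<exists>k. good (s @ [k])" if gs: "good s" for s
  proof (rule ccontr)
    assume "\<not> (\<exists>k. good (s @ [k]))"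
    then have "\<forall>k. \<exists>m\<ge>Suc (length s). \<not> (\<exists>s'. length s' = m \<and> (\<forall>i<m. s' ! i \<le> b i) \<and> take (Suc (length s)) s' = s @ [k] \<and> y \<in> F' s')"
      unfolding good_def by auto
    then obtain mf where mf: "\<And>k. mf k \<ge> Suc (length s)"
      "\<And>k. \<not> (\<exists>s'. length s' = mf k \<and> (\<forall>i<mf k. s' ! i \<le> b i) \<and> take (Suc (length s)) s' = s @ [k] \<and> y \<in> F' s')"
      by metis
    define M where "M = Max (mf ` {..b (length s)})"
    have M: "mf k \<le> M" if "k \<le> b (length s)" for k
      unfolding M_def using that by (intro Max_ge) auto
    have "M \<ge> length s" using M[of 0] mf(1)[of 0] by simp
    then obtain s' where s': "length s' = M" "\<forall>i<M. s' ! i \<le> b i" "take (length s) s' = s" "y \<in> F' s'"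
      using gs unfolding good_def by blast
    define k where "k = s' ! length s"
    have lsM: "length s < M" using M[of 0] mf(1)[of 0] by simp
    have kb: "k \<le> b (length s)" unfolding k_def using s'(2) lsM by simp
    define s'' where "s'' = take (mf k) s'"
    have "length s'' = mf k" unfolding s''_def using s'(1) M[OF kb] by simp
    moreover have "\<forall>i<mf k. s'' ! i \<le> b i" unfolding s''_def using s'(2) M[OF kb] by simp
    moreover have "take (Suc (length s)) s'' = s @ [k]"
    proof -
      have "take (Suc (length s)) s'' = take (Suc (length s)) s'"
        unfolding s''_def using mf(1)[of k] by (simp add: min_def)
      also have "\<dots> = take (length s) s' @ [s' ! length s]"
        using lsM s'(1) by (simp add: take_Suc_conv_app_nth)
      finally show ?thesis using s'(3) k_def by simp
    qed
    moreover have "y \<in> F' s''" unfolding s''_def using mono[of "mf k" s'] s'(4) s'(1) M[OF kb] by auto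
    ultimately show False using mf(2)[of k] by blast
  qed
  define c where "c s = (SOME k. good (s @ [k]))" for s
  have gp: "good (kpath c n)" for n
  proof (induction n)
    case 0 then show ?case using g0 by simp
  next
    case (Suc n)
    have "\<exists>k. good (kpath c n @ [k])" using gstep[OF Suc] .
    then have "good (kpath c n @ [c (kpath c n)])" unfolding c_def[of "kpath c n"] by (rule someI_ex)
    then show ?case by simp
  qed
  have "y \<in> F' (kpath c n)" for n
  proof -
    obtain s' where "length s' = n" "take n s' = kpath c n" "y \<in> F' s'"
      using gp[of n] unfolding good_def length_kpath by blast
    then show ?thesis by simp
  qed
  then show ?thesis using pre_kpath[of c] by metis
qed

context capa begin

definition AB :: "(nat list \<Rightarrow> real set) \<Rightarrow> (nat \<Rightarrow> nat) \<Rightarrow> nat \<Rightarrow> real set" where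
  "AB F' b m = {y. \<exists>x. (\<forall>i<m. x i \<le> b i) \<and> (\<forall>n. y \<in> F' (pre x n))}"

lemma AB_cong: "(\<And>i. i < m \<Longrightarrow> b i = b' i) \<Longrightarrow> AB F' b m = AB F' b' m"
  unfolding AB_def by auto

lemma AB_split: "AB F' b m = (\<Union>N. AB F' (b(m := N)) (Suc m))"
proof (intro equalityI subsetI)
  fix y assume "y \<in> AB F' b m"
  then obtain x where x: "\<forall>i<m. x i \<le> b i" "\<forall>n. y \<in> F' (pre x n)" unfolding AB_def by blast
  have "\<forall>i<Suc m. x i \<le> (b(m := x m)) i" using x(1) by (auto simp: less_Suc_eq)
  then have "y \<in> AB F' (b(m := x m)) (Suc m)" unfolding AB_def using x(2) by blast
  then show "y \<in> (\<Union>N. AB F' (b(m := N)) (Suc m))" by blast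
next
  fix y assume "y \<in> (\<Union>N. AB F' (b(m := N)) (Suc m))"
  then obtain N x where x: "\<forall>i<Suc m. x i \<le> (b(m := N)) i" "\<forall>n. y \<in> F' (pre x n)" unfolding AB_def by blast
  then have "\<forall>i<m. x i \<le> b i" by (metis fun_upd_other less_Suc_eq less_irrefl)
  then show "y \<in> AB F' b m" unfolding AB_def using x(2) by blast
qed

lemma AB_mono: "AB F' (b(m := N)) (Suc m) \<subseteq> AB F' (b(m := Suc N)) (Suc m)"
proof
  fix y assume "y \<in> AB F' (b(m := N)) (Suc m)"
  then obtain x where x: "\<forall>i<Suc m. x i \<le> (b(m := N)) i" "\<forall>n. y \<in> F' (pre x n)" unfolding AB_def by blast
  have "\<forall>i<Suc m. x i \<le> (b(m := Suc N)) i"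
  proof (intro allI impI)
    fix i assume "i < Suc m"
    then have "x i \<le> (b(m := N)) i" using x(1) by blast
    then show "x i \<le> (b(m := Suc N)) i" by (cases "i = m") auto
  qed
  then show "y \<in> AB F' (b(m := Suc N)) (Suc m)" unfolding AB_def using x(2) by blast
qed

lemma AB_step:
  assumes "t < cs (AB F' b m)" shows "\<exists>N. t < cs (AB F' (b(m := N)) (Suc m))"
proof (rule ccontr)
  assume "\<not> ?thesis"
  then have "\<And>N. cs (AB F' (b(m := N)) (Suc m)) \<le> t" by (simp add: not_less)
  then have "cs (\<Union>N. AB F' (b(m := N)) (Suc m)) \<le> t"
    by (intro cs_cont_below AB_mono)
  with assms show False unfolding AB_split[of F' b m] by simp
qed

lemma choquet:
  assumes A: "souslin A" and t: "t < cs (A \<inter> CC)"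
  shows "\<exists>K. compact K \<and> K \<subseteq> A \<inter> CC \<and> t \<le> cs K"
proof -
  obtain F where F: "\<And>s. closed (F s)" "A = {y. \<exists>x. \<forall>n. y \<in> F (pre x n)}"
    using A unfolding souslin_def by blast
  define F' where "F' s = CC \<inter> (\<Inter>j\<in>{..length s}. F (take j s))" for s
  have F'c: "compact (F' s)" for s unfolding F'_def
    using cantor_compact F(1) by (intro compact_Int_closed closed_INT) auto
  have F'm: "F' s \<subseteq> F' (take j s)" if "j \<le> length s" for s j
    unfolding F'_def using that by (auto simp: min_def)
  have AC: "A \<inter> CC = AB F' b 0" for b
  proof (intro equalityI subsetI)
    fix y assume "y \<in> A \<inter> CC"
    then obtain x where x: "\<And>n. y \<in> F (pre x n)" "y \<in> CC" using F(2) by blast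
    have "y \<in> F' (pre x n)" for n unfolding F'_def
      using x by (auto simp: take_pre)
    then show "y \<in> AB F' b 0" unfolding AB_def by blast
  next
    fix y assume "y \<in> AB F' b 0"
    then obtain x where x: "\<And>n. y \<in> F' (pre x n)" unfolding AB_def by blast
    have "y \<in> F (pre x n)" for n
    proof -
      from x[of n] have "y \<in> (\<Inter>j\<in>{..length (pre x n)}. F (take j (pre x n)))" unfolding F'_def by blast
      then have "y \<in> F (take (length (pre x n)) (pre x n))" by blast
      then show ?thesis by simp
    qed
    moreover have "y \<in> CC" using x[of 0] unfolding F'_def by auto
    ultimately show "y \<in> A \<inter> CC" using F(2) by blast
  qed
  define st where "st b m = b(m := (SOME N. t < cs (AB F' (b(m := N)) (Suc m))))" for b m
  define bb where "bb = bseq st"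
  have inv: "t < cs (AB F' (bb m) m)" for m
  proof (induction m)
    case 0 then show ?case using t AC[of "bb 0"] by simp
  next
    case (Suc m)
    from AB_step[OF Suc] show ?case unfolding bb_def bseq.simps st_def[of _ m]
      by (rule someI_ex)
  qed
  have agree: "bb (m + d) i = bb m i" if "i < m" for m d i
  proof (induction d)
    case 0 then show ?case by simp
  next
    case (Suc d)
    have "bb (m + Suc d) i = bb (m + d) i" using that unfolding bb_def by (simp add: st_def)
    then show ?case using Suc by simp
  qed
  define b where "b i = bb (Suc i) i" for i
  have bm: "bb m i = b i" if "i < m" for m i
    using agree[of i "Suc i" "m - Suc i"] that unfolding b_def by simp
  have inv2: "t < cs (AB F' b m)" for m
    using inv[of m] AB_cong[of m "bb m" b F'] bm by simp
  define SS where "SS m = {s. length s = m \<and> (\<forall>i<m. s ! i \<le> b i)}" for m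
  define K where "K m = (\<Union>s\<in>SS m. F' s)" for m
  have SSfin: "finite (SS m)" for m
  proof -
    have "SS m \<subseteq> {s. set s \<subseteq> {..(\<Sum>i<m. b i)} \<and> length s = m}"
    proof
      fix s assume s: "s \<in> SS m"
      have "s ! i \<le> (\<Sum>i<m. b i)" if "i < m" for i
      proof -
        have "s ! i \<le> b i" using s that unfolding SS_def by auto
        also have "b i \<le> (\<Sum>i<m. b i)" using that by (intro member_le_sum) auto
        finally show ?thesis .
      qed
      then show "s \<in> {s. set s \<subseteq> {..(\<Sum>i<m. b i)} \<and> length s = m}"
        using s unfolding SS_def by (auto simp: in_set_conv_nth)
    qed
    then show ?thesis by (rule finite_subset) (intro finite_lists_length_eq finite_atMost)
  qed
  have Kc: "compact (K m)" for m unfolding K_def using SSfin F'c by (intro compact_UN) auto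
  have Kdec: "K (Suc m) \<subseteq> K m" for m
  proof
    fix y assume "y \<in> K (Suc m)"
    then obtain s where s: "s \<in> SS (Suc m)" "y \<in> F' s" unfolding K_def by blast
    have "take m s \<in> SS m" using s(1) unfolding SS_def by auto
    moreover have "y \<in> F' (take m s)" using F'm[of m s] s unfolding SS_def by auto
    ultimately show "y \<in> K m" unfolding K_def by blast
  qed
  have ABK: "AB F' b m \<subseteq> K m" for m
  proof
    fix y assume "y \<in> AB F' b m"
    then obtain x where x: "\<forall>i<m. x i \<le> b i" "\<forall>n. y \<in> F' (pre x n)" unfolding AB_def by blast
    have "pre x m \<in> SS m" using x(1) unfolding SS_def pre_def by auto
    then show "y \<in> K m" unfolding K_def using x(2) by blast
  qed
  have tK: "t \<le> cs (K m)" for m using inv2[of m] cs_mono[OF ABK[of m]] by simp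
  have "t \<le> cs (\<Inter>m. K m)" by (rule cs_cont_above[of K t]) (use Kc Kdec tK in auto)
  moreover have "compact (\<Inter>m. K m)"
  proof -
    have "(\<Inter>m. K m) = K 0 \<inter> (\<Inter>m. K m)" by auto
    moreover have "compact (K 0 \<inter> (\<Inter>m. K m))"
      using Kc by (intro compact_Int_closed closed_INT ballI compact_imp_closed) auto
    ultimately show ?thesis by simp
  qed
  moreover have "(\<Inter>m. K m) \<subseteq> A \<inter> CC"
  proof
    fix y assume y: "y \<in> (\<Inter>m. K m)"
    have "\<exists>s. length s = m \<and> (\<forall>i<m. s ! i \<le> b i) \<and> y \<in> F' s" for m
      using y unfolding K_def SS_def by blast
    then obtain x where "\<forall>n. y \<in> F' (pre x n)" using koenig[of F' b y] F'm by blast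
    then show "y \<in> A \<inter> CC" unfolding AC[of "\<lambda>_. 0"] AB_def by blast
  qed
  ultimately show ?thesis by blast
qed

end


lemma edist_nonneg: "0 \<le> edist k u v"
  unfolding edist_def by (simp add: sum_nonneg)

lemma edist_bound:
  assumes "\<And>A. A \<subseteq> {1..k} \<Longrightarrow> \<bar>u A - v A\<bar> \<le> c" "0 \<le> c"
  shows "edist k u v \<le> c * (3/2)^k"
proof -
  have "(\<Sum>A\<in>Pow {1..k}. (u A - v A)\<^sup>2) \<le> (\<Sum>A\<in>Pow {1..k}. c\<^sup>2)"
  proof (intro sum_mono)
    fix A assume "A \<in> Pow {1..k}"
    then have "\<bar>u A - v A\<bar> \<le> c" using assms(1) by auto
    then have "\<bar>u A - v A\<bar>\<^sup>2 \<le> c\<^sup>2" by (intro power_mono) auto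
    then show "(u A - v A)\<^sup>2 \<le> c\<^sup>2" by simp
  qed
  also have "\<dots> = 2^k * c\<^sup>2" by (simp add: card_Pow)
  also have "\<dots> \<le> ((3/2)^k)\<^sup>2 * c\<^sup>2"
  proof -
    have "(2::real)^k \<le> (9/4)^k" by (intro power_mono) auto
    also have "(9/4::real)^k = ((3/2)^k)\<^sup>2" by (simp add: power_mult_distrib[symmetric] power2_eq_square power_mult[symmetric])
    finally show ?thesis by (intro mult_right_mono) auto
  qed
  also have "\<dots> = (c * (3/2)^k)\<^sup>2" by (simp add: power_mult_distrib)
  finally have "edist k u v \<le> sqrt ((c * (3/2)^k)\<^sup>2)" unfolding edist_def by (rule real_sqrt_le_mono)
  also have "\<dots> = c * (3/2)^k" using assms(2) by simp
  finally show ?thesis .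
qed

lemma quotients_ne: "1 \<le> k \<Longrightarrow> quotients q \<phi> k \<noteq> {}"
  unfolding quotients_def by (rule ccontr) (auto dest: spec[of _ "\<lambda>_. 1"])

lemma hausd_bound:
  assumes phi: "\<And>A. \<bar>\<phi>1 A - \<phi>2 A\<bar> \<le> c" and c: "0 \<le> c" and k: "1 \<le> k"
  shows "hausd k (quotients q \<phi>1 k) (quotients q \<phi>2 k) \<le> c * (3/2)^k"
    and "0 \<le> hausd k (quotients q \<phi>1 k) (quotients q \<phi>2 k)"
proof -
  let ?Q1 = "quotients q \<phi>1 k" and ?Q2 = "quotients q \<phi>2 k"
  let ?B = "c * (3/2)^k"
  have corr: "\<exists>v\<in>?Q2. edist k u v \<le> ?B \<and> edist k v u \<le> ?B" if uQ: "u \<in> ?Q1" for u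
  proof -
    obtain g where g: "g ` {1..q} \<subseteq> {1..k}" "u = (\<lambda>A. if A \<subseteq> {1..k} then \<phi>1 {i \<in> {1..q}. g i \<in> A} else 0)"
      using uQ unfolding quotients_def by blast
    define v where "v = (\<lambda>A. if A \<subseteq> {1..k} then \<phi>2 {i \<in> {1..q}. g i \<in> A} else (0::real))"
    have "v \<in> ?Q2" unfolding quotients_def v_def using g(1) by blast
    moreover have "edist k u v \<le> ?B" using phi c by (intro edist_bound) (auto simp: g(2) v_def)
    moreover have "edist k v u \<le> ?B" using phi c
      by (intro edist_bound) (auto simp: g(2) v_def abs_minus_commute)
    ultimately show ?thesis by blast
  qed
  have corr2: "\<exists>u\<in>?Q1. edist k u v \<le> ?B \<and> edist k v u \<le> ?B" if vQ: "v \<in> ?Q2" for v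
  proof -
    obtain g where g: "g ` {1..q} \<subseteq> {1..k}" "v = (\<lambda>A. if A \<subseteq> {1..k} then \<phi>2 {i \<in> {1..q}. g i \<in> A} else 0)"
      using vQ unfolding quotients_def by blast
    define u where "u = (\<lambda>A. if A \<subseteq> {1..k} then \<phi>1 {i \<in> {1..q}. g i \<in> A} else (0::real))"
    have "u \<in> ?Q1" unfolding quotients_def u_def using g(1) by blast
    moreover have "edist k u v \<le> ?B" using phi c by (intro edist_bound) (auto simp: g(2) u_def)
    moreover have "edist k v u \<le> ?B" using phi c
      by (intro edist_bound) (auto simp: g(2) u_def abs_minus_commute)
    ultimately show ?thesis by blast
  qed
  have bdd: "bdd_below ((\<lambda>y. edist k x y) ` S)" "bdd_below ((\<lambda>x. edist k x y) ` S)" for x y S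
    using edist_nonneg by (auto intro!: bdd_belowI[of _ 0])
  have I1: "(INF y\<in>?Q2. edist k x y) \<le> ?B" if "x \<in> ?Q1" for x
    using corr[OF that] by (meson bdd(1) cINF_lower order_trans)
  have I2: "(INF x\<in>?Q1. edist k x y) \<le> ?B" if yQ: "y \<in> ?Q2" for y
  proof -
    obtain u where u: "u \<in> ?Q1" "edist k u y \<le> ?B" using corr2[OF yQ] by blast
    have "(INF x\<in>?Q1. edist k x y) \<le> edist k u y" by (rule cINF_lower[OF bdd(2)]) (rule u(1))
    then show ?thesis using u(2) by linarith
  qed
  have I1n: "0 \<le> (INF y\<in>?Q2. edist k x y)" for x
    using quotients_ne[OF k] edist_nonneg by (intro cINF_greatest) auto
  have I2n: "0 \<le> (INF x\<in>?Q1. edist k x y)" for y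
    using quotients_ne[OF k] edist_nonneg by (intro cINF_greatest) auto
  have S1: "(SUP x\<in>?Q1. INF y\<in>?Q2. edist k x y) \<le> ?B"
    using quotients_ne[OF k] I1 by (intro cSUP_least) auto
  have S2: "(SUP y\<in>?Q2. INF x\<in>?Q1. edist k x y) \<le> ?B"
    using quotients_ne[OF k] I2 by (intro cSUP_least) auto
  show "hausd k ?Q1 ?Q2 \<le> ?B" unfolding hausd_def using S1 S2 by simp
  obtain x0 where x0: "x0 \<in> ?Q1" using quotients_ne[OF k] by blast
  have "0 \<le> (SUP x\<in>?Q1. INF y\<in>?Q2. edist k x y)"
  proof -
    have "bdd_above ((\<lambda>x. INF y\<in>?Q2. edist k x y) ` ?Q1)" using I1 by (auto intro!: bdd_aboveI)
    then have "(INF y\<in>?Q2. edist k x0 y) \<le> (SUP x\<in>?Q1. INF y\<in>?Q2. edist k x y)"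
      using x0 by (intro cSUP_upper) auto
    then show ?thesis using I1n[of x0] by linarith
  qed
  then show "0 \<le> hausd k ?Q1 ?Q2" unfolding hausd_def by simp
qed

lemma setfun_dist_bound:
  assumes phi: "\<And>A. \<bar>\<phi>1 A - \<phi>2 A\<bar> \<le> c" and c: "0 \<le> c"
  shows "setfun_dist q \<phi>1 \<phi>2 \<le> 3 * c"
proof -
  define f where "f k = (1/2) ^ (Suc k) * hausd (Suc k) (quotients q \<phi>1 (Suc k)) (quotients q \<phi>2 (Suc k))" for k
  define g where "g k = c * (3/4) * (3/4::real)^k" for k
  have fg: "f k \<le> g k" for k
  proof -
    have "f k \<le> (1/2) ^ (Suc k) * (c * (3/2)^(Suc k))"
      unfolding f_def by (intro mult_left_mono hausd_bound(1)[OF phi c]) auto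
    also have "\<dots> = g k" unfolding g_def by (simp add: power_mult_distrib[symmetric] field_simps)
    finally show ?thesis .
  qed
  have f0: "0 \<le> f k" for k unfolding f_def using hausd_bound(2)[OF phi c] by simp
  have gs: "g sums (c * (3/4) * (1 / (1 - 3/4)))" unfolding g_def
    by (intro sums_mult geometric_sums) simp
  then have sg: "summable g" by (rule sums_summable)
  have "summable f" using f0 fg by (intro summable_comparison_test'[OF sg]) auto
  then have "f sums setfun_dist q \<phi>1 \<phi>2" unfolding setfun_dist_def f_def[symmetric]
    by (rule summable_sums)
  from sums_le[OF fg this gs] show ?thesis by simp
qed



lemma list_partition:
  assumes "\<And>p. p \<in> set ps \<Longrightarrow> clopen_in_C (fst p)"
  shows "\<exists>G::real \<Rightarrow> nat. (\<forall>S. clopen_in_C {x \<in> CC. G x \<in> S}) \<and>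
           (\<forall>x\<in>CC. x \<in> (\<Union>p\<in>set ps. fst p) \<longrightarrow> (\<exists>p\<in>set ps. x \<in> fst p \<and> G x = snd p))"
  using assms
proof (induction ps)
  case Nil
  have "clopen_in_C {x \<in> CC. (0::nat) \<in> S}" for S
    by (cases "0 \<in> S") (auto simp: clopen_C clopen_empty)
  then show ?case by (intro exI[of _ "\<lambda>_. 0"]) auto
next
  case (Cons p ps)
  obtain G' where G': "\<forall>S. clopen_in_C {x \<in> CC. G' x \<in> S}"
    "\<forall>x\<in>CC. x \<in> (\<Union>p\<in>set ps. fst p) \<longrightarrow> (\<exists>p\<in>set ps. x \<in> fst p \<and> G' x = snd p)"
    using Cons by auto
  have W: "clopen_in_C (fst p)" using Cons.prems by auto
  define G where "G x = (if x \<in> fst p then snd p else G' x)" for x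
  have "clopen_in_C {x \<in> CC. G x \<in> S}" for S
  proof -
    have "{x \<in> CC. G x \<in> S} = (fst p \<inter> (if snd p \<in> S then CC else {})) \<union> ({x \<in> CC. G' x \<in> S} - fst p)"
      using clopen_sub[OF W] by (auto simp: G_def)
    moreover have "clopen_in_C (if snd p \<in> S then CC else {})" by (auto simp: clopen_C clopen_empty)
    ultimately show ?thesis using W G'(1) by (auto intro!: clopen_Un clopen_Int clopen_Diff)
  qed
  moreover have "\<forall>x\<in>CC. x \<in> (\<Union>p\<in>set (p # ps). fst p) \<longrightarrow> (\<exists>p'\<in>set (p # ps). x \<in> fst p' \<and> G x = snd p')"
    using G'(2) by (auto simp: G_def)
  ultimately show ?case by blast
qed

lemma clopen_partition:
  assumes I: "finite I" "I \<noteq> {}" and V: "\<And>i. i \<in> I \<Longrightarrow> open (V i)" "CC \<subseteq> (\<Union>i\<in>I. V i)"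
  shows "\<exists>G::real \<Rightarrow> nat. (\<forall>S. clopen_in_C {x \<in> CC. G x \<in> S}) \<and> (\<forall>x\<in>CC. G x \<in> I \<and> x \<in> V (G x))"
proof -
  have "\<forall>x\<in>CC. \<exists>p. snd p \<in> I \<and> clopen_in_C (fst p) \<and> x \<in> fst p \<and> fst p \<subseteq> V (snd p)"
  proof
    fix x assume x: "x \<in> CC"
    then obtain i where i: "i \<in> I" "x \<in> V i" using V(2) by blast
    obtain W where W: "clopen_in_C W" "{x} \<subseteq> W" "W \<subseteq> V i"
      using zero_dim[of "{x}" "V i"] x i V(1) by auto
    show "\<exists>p. snd p \<in> I \<and> clopen_in_C (fst p) \<and> x \<in> fst p \<and> fst p \<subseteq> V (snd p)"
      using i W by (intro exI[of _ "(W, i)"]) auto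
  qed
  then obtain pp where pp: "\<And>x. x \<in> CC \<Longrightarrow> snd (pp x) \<in> I \<and> clopen_in_C (fst (pp x)) \<and> x \<in> fst (pp x) \<and> fst (pp x) \<subseteq> V (snd (pp x))"
    by metis
  have "\<forall>x\<in>CC. \<exists>Op. open Op \<and> fst (pp x) = CC \<inter> Op"
    using pp clopen_open by blast
  then obtain Op where Op: "\<And>x. x \<in> CC \<Longrightarrow> open (Op x) \<and> fst (pp x) = CC \<inter> Op x" by metis
  have "CC \<subseteq> (\<Union>x\<in>CC. Op x)" using Op pp by blast
  then obtain T where T: "T \<subseteq> CC" "finite T" "CC \<subseteq> (\<Union>x\<in>T. Op x)"
    using compactE_image[OF cantor_compact, of CC Op] Op by auto
  obtain xs where xs: "set xs = T" using finite_list[OF T(2)] by blast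
  have cl: "clopen_in_C (fst p)" if "p \<in> set (map pp xs)" for p
    using that pp xs T(1) by auto
  obtain G :: "real \<Rightarrow> nat" where G: "\<forall>S. clopen_in_C {x \<in> CC. G x \<in> S}"
    "\<forall>x\<in>CC. x \<in> (\<Union>p\<in>set (map pp xs). fst p) \<longrightarrow> (\<exists>p\<in>set (map pp xs). x \<in> fst p \<and> G x = snd p)"
    using list_partition[of "map pp xs", OF cl] by blast
  have "G y \<in> I \<and> y \<in> V (G y)" if y: "y \<in> CC" for y
  proof -
    obtain x where x: "x \<in> T" "y \<in> Op x" using T(3) y by blast
    then have "y \<in> fst (pp x)" using Op[of x] T(1) y by auto
    then have "y \<in> (\<Union>p\<in>set (map pp xs). fst p)" using xs x by auto
    then obtain p where p: "p \<in> set (map pp xs)" "y \<in> fst p" "G y = snd p" using G(2) y by blast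
    then obtain x' where x': "x' \<in> T" "p = pp x'" using xs by auto
    then show ?thesis using pp[of x'] T(1) p by auto
  qed
  then show ?thesis using G(1) by blast
qed

context capa begin

lemma psiB_cs:
  assumes A: "souslin A" shows "psiB P (A \<inter> CC) = cs (A \<inter> CC)"
proof -
  let ?S = "{psiK P K | K. compact K \<and> K \<subseteq> A \<inter> CC}"
  have ne: "?S \<noteq> {}" by (rule ccontr) (use compact_empty in blast)
  have el: "x \<le> cs (A \<inter> CC)" if xS: "x \<in> ?S" for x
  proof -
    obtain K where K: "x = psiK P K" "compact K" "K \<subseteq> A \<inter> CC" using xS by blast
    then have "x = cs K" using cs_compact[of K] by auto
    then show ?thesis using cs_mono[OF K(3)] by simp
  qed
  have bdd: "bdd_above ?S" using el by (auto intro!: bdd_aboveI)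
  have le: "psiB P (A \<inter> CC) \<le> cs (A \<inter> CC)" unfolding psiB_def using ne el by (intro cSup_least) auto
  have ge: "cs (A \<inter> CC) \<le> psiB P (A \<inter> CC)"
  proof (rule ccontr)
    assume "\<not> ?thesis"
    then have lt: "psiB P (A \<inter> CC) < cs (A \<inter> CC)" by simp
    define t where "t = (psiB P (A \<inter> CC) + cs (A \<inter> CC)) / 2"
    have "t < cs (A \<inter> CC)" using lt unfolding t_def by simp
    then obtain K where K: "compact K" "K \<subseteq> A \<inter> CC" "t \<le> cs K" using choquet[OF A] by blast
    have "cs K = psiK P K" using cs_compact[of K] K by auto
    then have "cs K \<in> ?S" using K by blast
    then have "cs K \<le> psiB P (A \<inter> CC)" unfolding psiB_def using bdd by (intro cSup_upper) auto
    then show False using K(3) lt unfolding t_def by simp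
  qed
  from le ge show ?thesis by simp
qed

lemma psiB_clopen: "clopen_in_C H \<Longrightarrow> psiB P H = cs H"
  using psiB_cs[of H] closed_souslin compact_imp_closed clopen_compact clopen_sub
  by (metis inf.absorb1)

lemma main_approx:
  fixes F :: "real \<Rightarrow> nat"
  assumes q: "1 \<le> q" and Fm: "\<And>x. x \<in> CC \<Longrightarrow> F x \<in> {1..q}"
    and Fb: "\<And>S. \<exists>B. B \<in> sets borel \<and> {x \<in> CC. F x \<in> S} = B \<inter> CC"
    and d: "0 < d"
  shows "\<exists>G::real \<Rightarrow> nat. (\<forall>S. clopen_in_C {x \<in> CC. G x \<in> S}) \<and> (\<forall>x\<in>CC. G x \<in> {1..q}) \<and>
           (\<forall>S. \<bar>psiB P {x \<in> CC. F x \<in> S} - psiB P {x \<in> CC. G x \<in> S}\<bar> \<le> 2 * d)"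
proof -
  define Bi where "Bi i = {x \<in> CC. F x \<in> {i}}" for i
  have Bsous: "\<exists>A. souslin A \<and> {x \<in> CC. F x \<in> S} = A \<inter> CC" for S
    using Fb[of S] borel_souslin by blast
  have psiBF: "psiB P {x \<in> CC. F x \<in> S} = cs {x \<in> CC. F x \<in> S}" for S
    using Bsous[of S] psiB_cs by metis
  let ?e = "d / real q"
  have e: "0 < ?e" using d q by simp
  have "\<forall>i. \<exists>L. compact L \<and> L \<subseteq> Bi i \<and> cs (Bi i) - ?e \<le> cs L"
  proof
    fix i
    obtain A where A: "souslin A" "Bi i = A \<inter> CC" using Bsous[of "{i}"] unfolding Bi_def by blast
    have "cs (A \<inter> CC) - ?e < cs (A \<inter> CC)" using e by simp
    from choquet[OF A(1) this] show "\<exists>L. compact L \<and> L \<subseteq> Bi i \<and> cs (Bi i) - ?e \<le> cs L"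
      unfolding A(2) by blast
  qed
  then obtain L where L: "\<And>i. compact (L i)" "\<And>i. L i \<subseteq> Bi i" "\<And>i. cs (Bi i) - ?e \<le> cs (L i)"
    by metis
  have "\<forall>i. \<exists>U. open U \<and> Bi i \<subseteq> U \<and> co U < cs (Bi i) + ?e"
    using e by (intro allI cs_approx)
  then obtain U where U: "\<And>i. open (U i)" "\<And>i. Bi i \<subseteq> U i" "\<And>i. co (U i) < cs (Bi i) + ?e"
    by metis
  define U' where "U' i = U i - (\<Union>j\<in>{1..q} - {i}. L j)" for i
  have U'o: "open (U' i)" for i
  proof -
    have "closed (\<Union>j\<in>{1..q} - {i}. L j)" using L(1) by (intro closed_UN compact_imp_closed) auto
    then show ?thesis unfolding U'_def using U(1) by (intro open_Diff) auto
  qed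
  have BU': "Bi i \<subseteq> U' i" for i
  proof
    fix x assume x: "x \<in> Bi i"
    have "x \<notin> L j" if "j \<noteq> i" for j using L(2)[of j] x that unfolding Bi_def by auto
    then show "x \<in> U' i" using U(2) x unfolding U'_def by auto
  qed
  have cover: "CC \<subseteq> (\<Union>i\<in>{1..q}. U' i)"
  proof
    fix x assume "x \<in> CC"
    then have "x \<in> Bi (F x)" "F x \<in> {1..q}" using Fm unfolding Bi_def by auto
    then show "x \<in> (\<Union>i\<in>{1..q}. U' i)" using BU' by blast
  qed
  obtain G :: "real \<Rightarrow> nat" where G: "\<forall>S. clopen_in_C {x \<in> CC. G x \<in> S}" "\<forall>x\<in>CC. G x \<in> {1..q} \<and> x \<in> U' (G x)"
    using clopen_partition[of "{1..q}" U'] q U'o cover by auto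
  define Hi where "Hi i = {x \<in> CC. G x \<in> {i}}" for i
  have LH: "L i \<subseteq> Hi i" if i: "i \<in> {1..q}" for i
  proof
    fix x assume x: "x \<in> L i"
    then have xC: "x \<in> CC" using L(2) unfolding Bi_def by blast
    have "G x = i"
    proof (rule ccontr)
      assume ne: "G x \<noteq> i"
      have "x \<in> U' (G x)" using G(2) xC by blast
      moreover have "i \<in> {1..q} - {G x}" using i ne by auto
      ultimately show False using x unfolding U'_def by blast
    qed
    then show "x \<in> Hi i" unfolding Hi_def using xC by simp
  qed
  have HU: "Hi i \<subseteq> U i" for i using G(2) unfolding Hi_def U'_def by auto
  have bound: "\<bar>psiB P {x \<in> CC. F x \<in> S} - psiB P {x \<in> CC. G x \<in> S}\<bar> \<le> 2 * d" for S
  proof -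
    define S' where "S' = S \<inter> {1..q}"
    have S'f: "finite S'" unfolding S'_def by auto
    have cardS': "card S' \<le> q" unfolding S'_def by (metis card_atLeastAtMost diff_Suc_1 card_mono finite_atLeastAtMost inf_le2)
    have XF: "{x \<in> CC. F x \<in> S} = (\<Union>i\<in>S'. Bi i)" unfolding S'_def Bi_def using Fm by auto
    have XG: "{x \<in> CC. G x \<in> S} = (\<Union>i\<in>S'. Hi i)" unfolding S'_def Hi_def using G(2) by auto
    have XGc: "clopen_in_C {x \<in> CC. G x \<in> S}" using G(1) by blast
    let ?LS = "\<Union>i\<in>S'. L i" and ?US = "\<Union>i\<in>S'. U i"
    have d1: "cs ?US - cs (\<Union>i\<in>S'. Bi i) \<le> (\<Sum>i\<in>S'. cs (U i) - cs (Bi i))"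
      using U(2) by (intro cs_union_diff S'f) auto
    have d2: "cs (\<Union>i\<in>S'. Bi i) - cs ?LS \<le> (\<Sum>i\<in>S'. cs (Bi i) - cs (L i))"
      using L(2) by (intro cs_union_diff S'f) auto
    have s1: "(\<Sum>i\<in>S'. cs (U i) - cs (Bi i)) \<le> (\<Sum>i\<in>S'. ?e)"
    proof (intro sum_mono)
      fix i show "cs (U i) - cs (Bi i) \<le> ?e" using cs_le[OF U(1) order_refl, of i] U(3)[of i] by simp
    qed
    have s2: "(\<Sum>i\<in>S'. cs (Bi i) - cs (L i)) \<le> (\<Sum>i\<in>S'. ?e)"
    proof (intro sum_mono)
      fix i show "cs (Bi i) - cs (L i) \<le> ?e" using L(3)[of i] by simp
    qed
    have s3: "(\<Sum>i\<in>S'. ?e) \<le> d"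
    proof -
      have "(\<Sum>i\<in>S'. ?e) = real (card S') * ?e" by simp
      also have "\<dots> \<le> real q * ?e" using cardS' e by (intro mult_right_mono) auto
      also have "\<dots> = d" using q by simp
      finally show ?thesis .
    qed
    have LG: "?LS \<subseteq> (\<Union>i\<in>S'. Hi i)" using LH unfolding S'_def by blast
    have GU: "(\<Union>i\<in>S'. Hi i) \<subseteq> ?US" using HU by blast
    have LB: "?LS \<subseteq> (\<Union>i\<in>S'. Bi i)" using L(2) by blast
    have BU: "(\<Union>i\<in>S'. Bi i) \<subseteq> ?US" using U(2) by blast
    have a1: "cs ?LS \<le> cs (\<Union>i\<in>S'. Hi i)" "cs (\<Union>i\<in>S'. Hi i) \<le> cs ?US"
      using cs_mono[OF LG] cs_mono[OF GU] by auto
    have a2: "cs ?LS \<le> cs (\<Union>i\<in>S'. Bi i)" "cs (\<Union>i\<in>S'. Bi i) \<le> cs ?US"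
      using cs_mono[OF LB] cs_mono[OF BU] by auto
    have "psiB P {x \<in> CC. F x \<in> S} = cs (\<Union>i\<in>S'. Bi i)" using psiBF[of S] XF by simp
    moreover have "psiB P {x \<in> CC. G x \<in> S} = cs (\<Union>i\<in>S'. Hi i)" using psiB_clopen[OF XGc] XG by simp
    ultimately show ?thesis using a1 a2 d1 d2 s1 s2 s3 by linarith
  qed
  show ?thesis using G bound by blast
qed

end

theorem lemma3p9:
  fixes \<psi>H :: "real set \<Rightarrow> real" and q :: nat and F :: "real \<Rightarrow> nat" and \<epsilon> :: real
  assumes incr: "increasing_on {H. clopen_in_C H} \<psi>H"
    and submod: "submodular_on {H. clopen_in_C H} \<psi>H"
    and empty: "\<psi>H {} = 0"
    and Fmeas: "F \<in> measurable (restrict_space borel cantor_set) (count_space {1..q})"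
    and eps: "\<epsilon> > 0"
  shows "\<exists>G :: real \<Rightarrow> nat. continuous_on cantor_set G \<and> G ` cantor_set \<subseteq> {1..q} \<and>
           setfun_dist q (\<lambda>A. psiB \<psi>H {x \<in> cantor_set. F x \<in> A})
                         (\<lambda>A. psiB \<psi>H {x \<in> cantor_set. G x \<in> A}) < \<epsilon>"
proof -
  interpret capa \<psi>H using incr submod empty by unfold_locales
  have sp: "space (restrict_space borel CC) = CC" by (simp add: space_restrict_space)
  have Fm: "F x \<in> {1..q}" if "x \<in> CC" for x
    using measurable_space[OF Fmeas, of x] that sp by simp
  have q: "1 \<le> q" using Fm[OF zero_in_cantor] by simp
  have Fb: "\<exists>B. B \<in> sets borel \<and> {x \<in> CC. F x \<in> S} = B \<inter> CC" for S
  proof -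
    have "F -` (S \<inter> {1..q}) \<inter> space (restrict_space borel CC) \<in> sets (restrict_space borel CC)"
      by (rule measurable_sets[OF Fmeas]) simp
    moreover have "F -` (S \<inter> {1..q}) \<inter> space (restrict_space borel CC) = {x \<in> CC. F x \<in> S}"
      using sp Fm by auto
    ultimately have "{x \<in> CC. F x \<in> S} \<in> sets (restrict_space borel CC)" by simp
    then obtain B where "B \<in> sets borel" "{x \<in> CC. F x \<in> S} = CC \<inter> B"
      unfolding sets_restrict_space by auto
    then show ?thesis by blast
  qed
  define d where "d = \<epsilon> / 12"
  have d: "0 < d" using eps by (simp add: d_def)
  obtain G :: "real \<Rightarrow> nat" where G: "\<forall>S. clopen_in_C {x \<in> CC. G x \<in> S}" "\<forall>x\<in>CC. G x \<in> {1..q}"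
    "\<forall>S. \<bar>psiB \<psi>H {x \<in> CC. F x \<in> S} - psiB \<psi>H {x \<in> CC. G x \<in> S}\<bar> \<le> 2 * d"
    using main_approx[OF q _ Fb d] Fm by blast
  have cont: "continuous_on CC G"
    unfolding continuous_on_open_invariant
  proof (intro allI impI)
    fix B :: "nat set" assume "open B"
    obtain A where "open A" "{x \<in> CC. G x \<in> B} = CC \<inter> A" using clopen_open G(1) by blast
    then show "\<exists>A. open A \<and> A \<inter> CC = G -` B \<inter> CC" by (intro exI[of _ A]) auto
  qed
  have "setfun_dist q (\<lambda>A. psiB \<psi>H {x \<in> CC. F x \<in> A}) (\<lambda>A. psiB \<psi>H {x \<in> CC. G x \<in> A}) \<le> 3 * (2 * d)"
    using G(3) d by (intro setfun_dist_bound) auto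
  also have "\<dots> < \<epsilon>" using eps unfolding d_def by simp
  finally show ?thesis using cont G(2) by blast
qed


end
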